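(* Let $T=(Q,\Sigma,\Delta,R,q_0)$ be a top-down tree transducer and let $A$ be the domain automaton of $T$. Let $S\neq\emptyset$ be a state of $A$ (i.e., a nonempty subset of $Q$). Then for every $s\in T_\Sigma$: $s\in\text{dom}(S)$ if and only if $s\in\bigcap_{q\in S}\text{dom}(q)$.
   Context: A top-down tree transducer $T=(Q,\Sigma,\Delta,R,q_0)$ has finite state set $Q$, ranked input/output alphabets $\Sigma,\Delta$, initial state $q_0$, and finite rule set $R$ of rules $q(a(x_1,\dots,x_k))\to t$ with $a\in\Sigma_k$ ($\Sigma_k$ = symbols of rank $k$) and $t$ a tree over $\Delta$ whose leaves may additionally be of the form $q'(x_i)$, $q'\in Q$, $i\in[k]$; rules are used as rewrite rules in the usual way. For a state $q$, $\text{dom}(q)$ is the set of $s\in T_\Sigma$ such that some tree over $\Delta$ is derivable from $q(s)$. A top-down tree automaton is a transducer with $\Sigma=\Delta$ all of whose rules have the form $p(a(x_1,\dots,x_k))\to a(p_1(x_1),\dots,p_k(x_k))$. For $q\in Q$ and $a\in\Sigma_k$, $\text{rhs}_T(q,a)$ is the set of right-hand sides of rules of $T$ with left-hand side $q(a(x_1,\dots,x_k))$. For a set $\Gamma$ of right-hand sides, $\Gamma[x_i]$ is the set of all $q'\in Q$ such that $q'(x_i)$ occurs in some tree of $\Gamma$. The domain automaton $A$ of $T$ is the top-down tree automaton over $\Sigma$ whose states are all subsets of $Q$, with initial state $\{q_0\}$, and with the following rules: for every $a\in\Sigma_k$, every nonempty $S=\{q_1,\dots,q_n\}\subseteq Q$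 and every choice of nonempty subsets $\Gamma_1\subseteq\text{rhs}_T(q_1,a),\dots,\Gamma_n\subseteq\text{rhs}_T(q_n,a)$, the rule $S(a(x_1,\dots,x_k))\to a(S_1(x_1),\dots,S_k(x_k))$ with $S_i=\bigcup_{j=1}^n\Gamma_j[x_i]$; and for every $a\in\Sigma_k$ the rule $\emptyset(a(x_1,\dots,x_k))\to a(\emptyset(x_1),\dots,\emptyset(x_k))$. For a state $S$ of $A$, $\text{dom}(S)$ is the set of trees $s$ from which (starting with $S(s)$) a tree over $\Sigma$ is derivable. *)

theory Defs
  imports Main
begin

datatype 'f tree = Node 'f "'f tree list"

inductive_set trees :: "('f \<times> nat) set \<Rightarrow> 'f tree set" for F where
  "(f, length ts) \<in> F \<Longrightarrow> (\<forall>t\<in>set ts. t \<in> trees F) \<Longrightarrow> Node f ts \<in> trees F"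

(* Right-hand sides: trees over the output alphabet whose leaves may be q'(x_i).
   RSt q i stands for q(x_(i+1)), i.e. variables are indexed from 0. *)
datatype ('q, 'g) rhs = RNode 'g "('q, 'g) rhs list" | RSt 'q nat

fun rhs_wf :: "('g \<times> nat) set \<Rightarrow> 'q set \<Rightarrow> nat \<Rightarrow> ('q, 'g) rhs \<Rightarrow> bool" where
  "rhs_wf D Q k (RNode g ts) = ((g, length ts) \<in> D \<and> (\<forall>t\<in>set ts. rhs_wf D Q k t))"
| "rhs_wf D Q k (RSt q i) = (q \<in> Q \<and> i < k)"

(* A rule (q, a, k, t) stands for q(a(x_1,...,x_k)) -> t *)
type_synonym ('q, 'f, 'g) rule = "'q \<times> 'f \<times> nat \<times> ('q, 'g) rhs"

record ('q, 'f, 'g) tdtt =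
  states :: "'q set"
  inp :: "('f \<times> nat) set"
  outp :: "('g \<times> nat) set"
  rules :: "('q, 'f, 'g) rule set"
  init :: 'q

definition tdtt_wf :: "('q, 'f, 'g) tdtt \<Rightarrow> bool" where
  "tdtt_wf T \<longleftrightarrow> finite (states T) \<and> finite (inp T) \<and> finite (outp T) \<and>
     finite (rules T) \<and> init T \<in> states T \<and>
     (\<forall>(q, a, k, t) \<in> rules T. q \<in> states T \<and> (a, k) \<in> inp T \<and>
        rhs_wf (outp T) (states T) k t)"

(* Sentential forms: trees over the output alphabet whose leaves may be q(s),
   s an input tree *)
datatype ('q, 'f, 'g) sf = SNode 'g "('q, 'f, 'g) sf list" | SSt 'q "'f tree"

fun inst :: "'f tree list \<Rightarrow> ('q, 'g) rhs \<Rightarrow> ('q, 'f, 'g) sf" where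
  "inst ss (RNode g ts) = SNode g (map (inst ss) ts)"
| "inst ss (RSt q i) = SSt q (ss ! i)"

fun emb :: "'g tree \<Rightarrow> ('q, 'f, 'g) sf" where
  "emb (Node g ts) = SNode g (map emb ts)"

inductive step :: "('q, 'f, 'g) rule set \<Rightarrow> ('q, 'f, 'g) sf \<Rightarrow> ('q, 'f, 'g) sf \<Rightarrow> bool"
  for R where
  root: "(q, a, length ss, t) \<in> R \<Longrightarrow> step R (SSt q (Node a ss)) (inst ss t)"
| ctx: "i < length us \<Longrightarrow> step R (us ! i) v \<Longrightarrow> step R (SNode g us) (SNode g (us[i := v]))"

definition dom_st :: "('q, 'f, 'g) tdtt \<Rightarrow> 'q \<Rightarrow> 'f tree set" where
  "dom_st T q = {s \<in> trees (inp T). \<exists>u \<in> trees (outp T). (step (rules T))\<^sup>*\<^sup>* (SSt q s) (emb u)}"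

definition rhs_set :: "('q, 'f, 'g) tdtt \<Rightarrow> 'q \<Rightarrow> 'f \<Rightarrow> nat \<Rightarrow> ('q, 'g) rhs set" where
  "rhs_set T q a k = {t. (q, a, k, t) \<in> rules T}"

fun states_at :: "nat \<Rightarrow> ('q, 'g) rhs \<Rightarrow> 'q set" where
  "states_at i (RNode g ts) = (\<Union>t\<in>set ts. states_at i t)"
| "states_at i (RSt q j) = (if j = i then {q} else {})"

definition gam_at :: "('q, 'g) rhs set \<Rightarrow> nat \<Rightarrow> 'q set" where
  "gam_at G i = (\<Union>t\<in>G. states_at i t)"

definition dom_aut_rules :: "('q, 'f, 'g) tdtt \<Rightarrow> ('q set, 'f, 'f) rule set" where
  "dom_aut_rules T =
     {(S, a, k, RNode a (map (\<lambda>i. RSt (\<Union>q\<in>S. gam_at (G q) i) i) [0..<k])) | S a k G.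
        (a, k) \<in> inp T \<and> S \<noteq> {} \<and> S \<subseteq> states T \<and>
        (\<forall>q\<in>S. G q \<noteq> {} \<and> G q \<subseteq> rhs_set T q a k)}
   \<union> {({}, a, k, RNode a (map (\<lambda>i. RSt {} i) [0..<k])) | a k. (a, k) \<in> inp T}"

definition domain_automaton :: "('q, 'f, 'g) tdtt \<Rightarrow> ('q set, 'f, 'f) tdtt" where
  "domain_automaton T = \<lparr>states = Pow (states T), inp = inp T, outp = inp T,
     rules = dom_aut_rules T, init = {init T}\<rparr>"

end

theory Submission
  imports Defs
begin

lemma ctx_star:
  assumes "(step R)\<^sup>*\<^sup>* x y"
  shows "i < length us \<Longrightarrow> us ! i = x \<Longrightarrow> (step R)\<^sup>*\<^sup>* (SNode g us) (SNode g (us[i := y]))"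
  using assms
proof (induction rule: rtranclp_induct)
  case base
  then show ?case by (metis list_update_id rtranclp.rtrancl_refl)
next
  case (step y z)
  have "step R (SNode g (us[i := y])) (SNode g ((us[i := y])[i := z]))"
    using step by (intro step.ctx) auto
  then show ?case using step by (metis list_update_overwrite rtranclp.rtrancl_into_rtrancl)
qed

lemma list_star_aux:
  "list_all2 (step R)\<^sup>*\<^sup>* us vs \<Longrightarrow> (step R)\<^sup>*\<^sup>* (SNode g (pre @ us)) (SNode g (pre @ vs))"
proof (induction us vs arbitrary: pre rule: list_all2_induct)
  case Nil
  then show ?case by simp
next
  case (Cons x xs y ys)
  have "(step R)\<^sup>*\<^sup>* (SNode g (pre @ x # xs)) (SNode g ((pre @ x # xs)[length pre := y]))"
    using Cons by (intro ctx_star) auto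
  moreover have "(pre @ x # xs)[length pre := y] = (pre @ [y]) @ xs" by simp
  moreover have "(step R)\<^sup>*\<^sup>* (SNode g ((pre @ [y]) @ xs)) (SNode g ((pre @ [y]) @ ys))"
    using Cons by blast
  ultimately show ?case by simp
qed

lemma list_star:
  "list_all2 (step R)\<^sup>*\<^sup>* us vs \<Longrightarrow> (step R)\<^sup>*\<^sup>* (SNode g us) (SNode g vs)"
  using list_star_aux[of R us vs g "[]"] by simp

lemma decomp:
  assumes "(step R)\<^sup>*\<^sup>* (SNode g us) w"
  shows "\<exists>vs. w = SNode g vs \<and> list_all2 (step R)\<^sup>*\<^sup>* us vs"
  using assms
proof (induction rule: rtranclp_induct)
  case base
  then show ?case by (simp add: list_all2_refl)
next
  case (step y z)
  then obtain vs where y: "y = SNode g vs" and l: "list_all2 (step R)\<^sup>*\<^sup>* us vs" by blast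
  from step(2)[unfolded y] obtain i v where "i < length vs" "step R (vs ! i) v" "z = SNode g (vs[i := v])"
    by (cases rule: step.cases) auto
  moreover have "list_all2 (step R)\<^sup>*\<^sup>* us (vs[i := v])"
    using l calculation by (auto simp: list_all2_conv_all_nth nth_list_update)
  ultimately show ?case by blast
qed

lemma first_step:
  assumes "(step R)\<^sup>*\<^sup>* (SSt q s) (emb u)"
  shows "\<exists>a ss t. s = Node a ss \<and> (q, a, length ss, t) \<in> R \<and> (step R)\<^sup>*\<^sup>* (inst ss t) (emb u)"
  using assms
proof (cases rule: converse_rtranclpE)
  case base
  then show ?thesis by (cases u) simp
next
  case (step y)
  from step(1) show ?thesis
    by (cases rule: step.cases) (use step(2) in auto)
qed

lemma trees_sub: "Node g us \<in> trees D \<Longrightarrow> (g, length us) \<in> D \<and> (\<forall>t\<in>set us. t \<in> trees D)"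
  by (erule trees.cases) auto

lemma inst_decomp:
  "u \<in> trees D \<Longrightarrow> (step R)\<^sup>*\<^sup>* (inst ss t) (emb u) \<Longrightarrow> q \<in> states_at i t \<Longrightarrow>
   \<exists>u'\<in>trees D. (step R)\<^sup>*\<^sup>* (SSt q (ss ! i)) (emb u')"
proof (induction t arbitrary: u)
  case (RNode g ts)
  obtain g' us' where u: "u = Node g' us'" by (cases u)
  have "(step R)\<^sup>*\<^sup>* (SNode g (map (inst ss) ts)) (emb u)" using RNode.prems(2) by simp
  from decomp[OF this] obtain vs where e: "emb u = SNode g vs"
    and l: "list_all2 (step R)\<^sup>*\<^sup>* (map (inst ss) ts) vs" by blast
  from e u have vs: "vs = map emb us'" "g' = g" by auto
  from RNode.prems(3) obtain t' where t': "t' \<in> set ts" "q \<in> states_at i t'" by auto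
  then obtain j where j: "j < length ts" "ts ! j = t'" by (meson in_set_conv_nth)
  have len: "length us' = length ts" using l vs list_all2_lengthD by fastforce
  have "(step R)\<^sup>*\<^sup>* (inst ss t') (emb (us' ! j))"
  proof -
    have "\<forall>i<length ts. (step R)\<^sup>*\<^sup>* (inst ss (ts ! i)) (emb (us' ! i))"
      using l len unfolding vs by (simp add: list_all2_conv_all_nth)
    then show ?thesis using j by blast
  qed
  moreover have "us' ! j \<in> trees D"
  proof -
    have m: "us' ! j \<in> set us'" using j len by simp
    have "Node g' us' \<in> trees D" using RNode.prems(1) u by simp
    then have "\<forall>t\<in>set us'. t \<in> trees D" by (rule trees_sub[THEN conjunct2])
    then show ?thesis using m by (rule bspec)
  qed
  ultimately show ?case using RNode.IH[OF t'(1) _ _ t'(2)] by blast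
next
  case (RSt q' j)
  then have "q = q'" "j = i" by (auto split: if_splits)
  then show ?case using RSt.prems(1,2) by auto
qed

lemma inst_comp:
  "rhs_wf D Q k t \<Longrightarrow> (\<And>q i. q \<in> states_at i t \<Longrightarrow> \<exists>u'\<in>trees D. (step R)\<^sup>*\<^sup>* (SSt q (ss ! i)) (emb u'))
   \<Longrightarrow> \<exists>u\<in>trees D. (step R)\<^sup>*\<^sup>* (inst ss t) (emb u)"
proof (induction t)
  case (RNode g ts)
  have "\<forall>j<length ts. \<exists>u\<in>trees D. (step R)\<^sup>*\<^sup>* (inst ss (ts ! j)) (emb u)"
  proof (intro allI impI)
    fix j assume j: "j < length ts"
    then have m: "ts ! j \<in> set ts" by simp
    have wf: "rhs_wf D Q k (ts ! j)" using RNode.prems(1) m by simp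
    show "\<exists>u\<in>trees D. (step R)\<^sup>*\<^sup>* (inst ss (ts ! j)) (emb u)"
      apply (rule RNode.IH[OF m wf])
      apply (rule RNode.prems(2))
      using m by auto
  qed
  then obtain f where f: "\<forall>j<length ts. f j \<in> trees D \<and> (step R)\<^sup>*\<^sup>* (inst ss (ts ! j)) (emb (f j))"
    by metis
  define us where "us = map f [0..<length ts]"
  have "Node g us \<in> trees D"
  proof (rule trees.intros)
    show "(g, length us) \<in> D" using RNode.prems(1) by (simp add: us_def)
    show "\<forall>t\<in>set us. t \<in> trees D" using f by (auto simp: us_def)
  qed
  moreover have "list_all2 (step R)\<^sup>*\<^sup>* (map (inst ss) ts) (map emb us)"
    using f by (simp add: us_def list_all2_conv_all_nth)
  then have "(step R)\<^sup>*\<^sup>* (inst ss (RNode g ts)) (emb (Node g us))"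
    by (simp add: list_star)
  ultimately show ?case by blast
next
  case (RSt q i)
  then show ?case by simp
qed

lemma states_at_wf: "rhs_wf D Q k t \<Longrightarrow> q \<in> states_at i t \<Longrightarrow> q \<in> Q \<and> i < k"
  by (induction t) (auto split: if_splits)


lemma states_at_map: "states_at i (RNode a (map (\<lambda>j. RSt (F j) j) [0..<k])) = (if i < k then {F i} else {})"
  by auto

lemma dom_A: "dom_st (domain_automaton T) S =
  {s \<in> trees (inp T). \<exists>u \<in> trees (inp T). (step (dom_aut_rules T))\<^sup>*\<^sup>* (SSt S s) (emb u)}"
  by (simp add: dom_st_def domain_automaton_def)

lemma root_then:
  "(q, a, length ss, t) \<in> R \<Longrightarrow> (step R)\<^sup>*\<^sup>* (inst ss t) w \<Longrightarrow> (step R)\<^sup>*\<^sup>* (SSt q (Node a ss)) w"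
  by (meson converse_rtranclp_into_rtranclp step.root)

lemma empty_state:
  fixes T :: "('q, 'f, 'g) tdtt"
  shows "s \<in> trees (inp T) \<Longrightarrow> \<exists>u\<in>trees (inp T). (step (dom_aut_rules T))\<^sup>*\<^sup>* (SSt {} s) (emb u)"
proof (induction rule: trees.induct)
  case (1 f ts)
  define r where "r = RNode f (map (\<lambda>i. RSt ({}::'q set) i) [0..<length ts])"
  have rule: "({}, f, length ts, r) \<in> dom_aut_rules T"
    unfolding dom_aut_rules_def r_def using 1(1) by blast
  have wf: "rhs_wf (inp T) UNIV (length ts) r" using 1(1) by (auto simp: r_def)
  have "\<exists>u\<in>trees (inp T). (step (dom_aut_rules T))\<^sup>*\<^sup>* (inst ts r) (emb u)"
  proof (rule inst_comp[OF wf])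
    fix q i assume "q \<in> states_at i r"
    then have "q = {}" "i < length ts" unfolding r_def by (auto split: if_splits)
    then show "\<exists>u'\<in>trees (inp T). (step (dom_aut_rules T))\<^sup>*\<^sup>* (SSt q (ts ! i)) (emb u')"
      using 1(2) by auto
  qed
  then show ?case using root_then[OF rule] by blast
qed

lemma main:
  fixes T :: "('q, 'f, 'g) tdtt"
  assumes wfT: "tdtt_wf T"
  shows "S \<subseteq> states T \<Longrightarrow> S \<noteq> {} \<Longrightarrow> s \<in> trees (inp T) \<Longrightarrow>
    (s \<in> dom_st (domain_automaton T) S \<longleftrightarrow> (\<forall>q\<in>S. s \<in> dom_st T q))"
proof (induction s arbitrary: S)
  case (Node a ss)
  define k where "k = length ss"
  have ak: "(a, k) \<in> inp T" and sub: "\<forall>t\<in>set ss. t \<in> trees (inp T)"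
    using trees_sub[OF Node.prems(3)] by (auto simp: k_def)
  have rwf: "\<And>q a k t. (q, a, k, t) \<in> rules T \<Longrightarrow> rhs_wf (outp T) (states T) k t"
    using wfT unfolding tdtt_wf_def by blast
  show ?case
  proof
    assume "Node a ss \<in> dom_st (domain_automaton T) S"
    then obtain u where u: "u \<in> trees (inp T)"
      "(step (dom_aut_rules T))\<^sup>*\<^sup>* (SSt S (Node a ss)) (emb u)" by (auto simp: dom_A)
    from first_step[OF u(2)] obtain t where
      rt: "(S, a, k, t) \<in> dom_aut_rules T" and dt: "(step (dom_aut_rules T))\<^sup>*\<^sup>* (inst ss t) (emb u)"
      by (auto simp: k_def)
    have "\<exists>G. t = RNode a (map (\<lambda>i. RSt (\<Union>q\<in>S. gam_at (G q) i) i) [0..<k]) \<and>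
       (\<forall>q\<in>S. G q \<noteq> {} \<and> G q \<subseteq> rhs_set T q a k)"
      using rt Node.prems(2) unfolding dom_aut_rules_def by auto
    then obtain G where t: "t = RNode a (map (\<lambda>i. RSt (\<Union>q\<in>S. gam_at (G q) i) i) [0..<k])"
      and G: "\<forall>q\<in>S. G q \<noteq> {} \<and> G q \<subseteq> rhs_set T q a k" by blast
    define Si where "Si i = (\<Union>q\<in>S. gam_at (G q) i)" for i
    have t': "t = RNode a (map (\<lambda>i. RSt (Si i) i) [0..<k])" using t by (simp add: Si_def)
    show "\<forall>q\<in>S. Node a ss \<in> dom_st T q"
    proof
      fix q assume qS: "q \<in> S"
      obtain tq where tq: "tq \<in> G q" using G qS by blast
      then have rq: "(q, a, k, tq) \<in> rules T" using G qS by (auto simp: rhs_set_def)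
      have "\<exists>u\<in>trees (outp T). (step (rules T))\<^sup>*\<^sup>* (inst ss tq) (emb u)"
      proof (rule inst_comp[OF rwf[OF rq]])
        fix q' i assume q': "q' \<in> states_at i tq"
        have ik: "i < k" using states_at_wf[OF rwf[OF rq] q'] by simp
        have q'S: "q' \<in> Si i" using q' tq qS by (auto simp: Si_def gam_at_def)
        have "Si i \<in> states_at i t" using ik by (simp add: t' states_at_map)
        from inst_decomp[OF u(1) dt this] obtain u' where
          "u' \<in> trees (inp T)" "(step (dom_aut_rules T))\<^sup>*\<^sup>* (SSt (Si i) (ss ! i)) (emb u')" by blast
        moreover have ssi: "ss ! i \<in> set ss" using ik by (simp add: k_def)
        ultimately have "ss ! i \<in> dom_st (domain_automaton T) (Si i)"
          using sub by (auto simp: dom_A)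
        moreover have "Si i \<subseteq> states T"
        proof
          fix x assume "x \<in> Si i"
          then obtain q2 t2 where "q2 \<in> S" "t2 \<in> G q2" "x \<in> states_at i t2"
            by (auto simp: Si_def gam_at_def)
          then have "(q2, a, k, t2) \<in> rules T" using G by (auto simp: rhs_set_def)
          from states_at_wf[OF rwf[OF this] \<open>x \<in> states_at i t2\<close>] show "x \<in> states T" by simp
        qed
        moreover have "Si i \<noteq> {}" using q'S by blast
        ultimately have "ss ! i \<in> dom_st T q'"
          using Node.IH[OF ssi, of "Si i"] sub ssi q'S by blast
        then show "\<exists>u'\<in>trees (outp T). (step (rules T))\<^sup>*\<^sup>* (SSt q' (ss ! i)) (emb u')"
          by (simp add: dom_st_def)
      qed
      then show "Node a ss \<in> dom_st T q"
        using root_then[of q a ss tq "rules T"] rq Node.prems(3)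
        by (auto simp: dom_st_def k_def)
    qed
  next
    assume all: "\<forall>q\<in>S. Node a ss \<in> dom_st T q"
    have "\<forall>q\<in>S. \<exists>t. (q, a, k, t) \<in> rules T \<and>
       (\<exists>u\<in>trees (outp T). (step (rules T))\<^sup>*\<^sup>* (inst ss t) (emb u))"
    proof
      fix q assume "q \<in> S"
      then obtain u where u: "u \<in> trees (outp T)" "(step (rules T))\<^sup>*\<^sup>* (SSt q (Node a ss)) (emb u)"
        using all by (auto simp: dom_st_def)
      from first_step[OF u(2)] u(1) show "\<exists>t. (q, a, k, t) \<in> rules T \<and>
       (\<exists>u\<in>trees (outp T). (step (rules T))\<^sup>*\<^sup>* (inst ss t) (emb u))"
        by (auto simp: k_def)
    qed
    from bchoice[OF this] obtain tf where tf: "\<forall>q\<in>S. (q, a, k, tf q) \<in> rules T \<and>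
       (\<exists>u\<in>trees (outp T). (step (rules T))\<^sup>*\<^sup>* (inst ss (tf q)) (emb u))"
      by blast
    define Si where "Si i = (\<Union>q\<in>S. gam_at {tf q} i)" for i
    define r where "r = RNode a (map (\<lambda>i. RSt (Si i) i) [0..<k])"
    have rule: "(S, a, k, r) \<in> dom_aut_rules T"
      unfolding dom_aut_rules_def
      apply (rule UnI1)
      apply (rule CollectI)
      apply (rule exI[of _ S], rule exI[of _ a], rule exI[of _ k], rule exI[of _ "\<lambda>q. {tf q}"])
      using ak Node.prems(1,2) tf by (auto simp: r_def Si_def rhs_set_def)
    have wf: "rhs_wf (inp T) UNIV k r" using ak by (auto simp: r_def)
    have "\<exists>u\<in>trees (inp T). (step (dom_aut_rules T))\<^sup>*\<^sup>* (inst ss r) (emb u)"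
    proof (rule inst_comp[OF wf])
      fix q'' i assume "q'' \<in> states_at i r"
      then have q'': "q'' = Si i" and ik: "i < k" by (auto simp: r_def states_at_map split: if_splits)
      have ssi: "ss ! i \<in> set ss" using ik by (simp add: k_def)
      show "\<exists>u'\<in>trees (inp T). (step (dom_aut_rules T))\<^sup>*\<^sup>* (SSt q'' (ss ! i)) (emb u')"
      proof (cases "Si i = {}")
        case True
        then show ?thesis using empty_state[of "ss ! i" T] sub ssi q'' by auto
      next
        case False
        have "Si i \<subseteq> states T"
        proof
          fix x assume "x \<in> Si i"
          then obtain q2 where "q2 \<in> S" "x \<in> states_at i (tf q2)"
            by (auto simp: Si_def gam_at_def)
          then have "(q2, a, k, tf q2) \<in> rules T" using tf by blast
          from states_at_wf[OF rwf[OF this] \<open>x \<in> states_at i (tf q2)\<close>] show "x \<in> states T" by simp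
        qed
        moreover have "\<forall>q'\<in>Si i. ss ! i \<in> dom_st T q'"
        proof
          fix q' assume "q' \<in> Si i"
          then obtain q2 where q2: "q2 \<in> S" "q' \<in> states_at i (tf q2)"
            by (auto simp: Si_def gam_at_def)
          then obtain u where "u \<in> trees (outp T)" "(step (rules T))\<^sup>*\<^sup>* (inst ss (tf q2)) (emb u)"
            using tf by blast
          from inst_decomp[OF this q2(2)] show "ss ! i \<in> dom_st T q'"
            using sub ssi by (auto simp: dom_st_def)
        qed
        ultimately have "ss ! i \<in> dom_st (domain_automaton T) (Si i)"
          using Node.IH[OF ssi, of "Si i"] False sub ssi by blast
        then show ?thesis using q'' by (auto simp: dom_A)
      qed
    qed
    then show "Node a ss \<in> dom_st (domain_automaton T) S"
      using root_then[of S a ss r "dom_aut_rules T"] rule Node.prems(3)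
      by (auto simp: dom_A k_def)
  qed
qed

theorem lemma1:
  fixes T :: "('q, 'f, 'g) tdtt" and S :: "'q set" and s :: "'f tree"
  assumes "tdtt_wf T" and "S \<subseteq> states T" and "S \<noteq> {}" and "s \<in> trees (inp T)"
  shows "s \<in> dom_st (domain_automaton T) S \<longleftrightarrow> s \<in> (\<Inter>q\<in>S. dom_st T q)"
  using main[OF assms] by simp

end
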